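(* Let $(\mathcal C,\otimes,I)$ be a closed monoidal category, $M$ a strong monad on $\mathcal C$ with strength $\tau$, and $A$ an object. Then the tuple $\langle MA\Rightarrow MA,\ \Lambda(p),\ \mathsf{comp},\ \mathsf{ident}\rangle$, where $p = \mu_A\circ M\mathsf{app}\circ\tau : M(MA\Rightarrow MA)\otimes MA\to M((MA\Rightarrow MA)\otimes MA)\to MMA\to MA$, is an Eilenberg--Moore $M$-monoid.
   Context: Closed means each functor $(-)\otimes B$ has a right adjoint $B\Rightarrow(-)$; $\Lambda: \mathcal C(X\otimes B,C)\cong\mathcal C(X,B\Rightarrow C)$ denotes currying and $\mathsf{app}:(B\Rightarrow C)\otimes B\to C$ the counit. Structural isomorphisms are written $\cong$. $\mathsf{comp}=\Lambda(k):(B\Rightarrow C)\otimes(X\Rightarrow B)\to(X\Rightarrow C)$ where $k = \mathsf{app}\circ(\mathrm{id}\otimes\mathsf{app})\circ\cong : ((B\Rightarrow C)\otimes(X\Rightarrow B))\otimes X\to C$, and $\mathsf{ident}=\Lambda(I\otimes X\xrightarrow{\cong}X): I\to(X\Rightarrow X)$ (here with $X=B=C=MA$). A strong monad has strength $\tau_{X,Y}: MX\otimes Y\to M(X\otimes Y)$ satisfying the usual coherence laws. An Eilenberg--Moore $M$-monoid is $\langle E,a: ME\to E,m: E\otimes E\to E,u: I\to E\rangle$ with $\langle E,a\rangle$ an Eilenberg--Moore $M$-algebra ($a\circ Ma=a\circ\mu$, $a\circ\eta=\mathrm{id}$), $\langle E,m,u\rangle$ a monoid, and $m\circ(a\otimes\mathrm{id}_E)=a\circ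 Mm\circ\tau_{E,E}$. *)

theory Defs
  imports Main
begin

text \<open>Categories are given by hom-sets Hom X Y (objects of type 'o, morphisms of
 type 'm), composition cmp g f (g after f) and identities idm X.\<close>

locale category =
  fixes Hom :: "'o \<Rightarrow> 'o \<Rightarrow> 'm set"
    and cmp :: "'m \<Rightarrow> 'm \<Rightarrow> 'm"
    and idm :: "'o \<Rightarrow> 'm"
  assumes cmp_Hom: "\<And>f g X Y Z. f \<in> Hom X Y \<Longrightarrow> g \<in> Hom Y Z \<Longrightarrow> cmp g f \<in> Hom X Z"
    and idm_Hom: "\<And>X. idm X \<in> Hom X X"
    and idm_left: "\<And>f X Y. f \<in> Hom X Y \<Longrightarrow> cmp (idm Y) f = f"
    and idm_right: "\<And>f X Y. f \<in> Hom X Y \<Longrightarrow> cmp f (idm X) = f"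
    and cmp_assoc: "\<And>f g h W X Y Z. f \<in> Hom W X \<Longrightarrow> g \<in> Hom X Y \<Longrightarrow> h \<in> Hom Y Z \<Longrightarrow>
                      cmp h (cmp g f) = cmp (cmp h g) f"

definition is_iso :: "('o \<Rightarrow> 'o \<Rightarrow> 'm set) \<Rightarrow> ('m \<Rightarrow> 'm \<Rightarrow> 'm) \<Rightarrow> ('o \<Rightarrow> 'm)
    \<Rightarrow> 'o \<Rightarrow> 'o \<Rightarrow> 'm \<Rightarrow> bool" where
  "is_iso Hom cmp idm X Y f \<longleftrightarrow> f \<in> Hom X Y \<and>
     (\<exists>g \<in> Hom Y X. cmp g f = idm X \<and> cmp f g = idm Y)"

locale monoidal_category = category Hom cmp idm
  for Hom :: "'o \<Rightarrow> 'o \<Rightarrow> 'm set"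
    and cmp :: "'m \<Rightarrow> 'm \<Rightarrow> 'm"
    and idm :: "'o \<Rightarrow> 'm" +
  fixes tens :: "'o \<Rightarrow> 'o \<Rightarrow> 'o"
    and tensm :: "'m \<Rightarrow> 'm \<Rightarrow> 'm"
    and I :: 'o
    and asc :: "'o \<Rightarrow> 'o \<Rightarrow> 'o \<Rightarrow> 'm"
    and lu :: "'o \<Rightarrow> 'm"
    and ru :: "'o \<Rightarrow> 'm"
  assumes tensm_Hom: "\<And>f g A B C D. f \<in> Hom A B \<Longrightarrow> g \<in> Hom C D \<Longrightarrow>
                          tensm f g \<in> Hom (tens A C) (tens B D)"
    and tensm_idm: "\<And>A B. tensm (idm A) (idm B) = idm (tens A B)"
    and tensm_cmp: "\<And>f g f' g' A B C A' B' C'. f \<in> Hom A B \<Longrightarrow> g \<in> Hom B C \<Longrightarrow>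
                       f' \<in> Hom A' B' \<Longrightarrow> g' \<in> Hom B' C' \<Longrightarrow>
                       tensm (cmp g f) (cmp g' f') = cmp (tensm g g') (tensm f f')"
    and asc_iso: "\<And>X Y Z. is_iso Hom cmp idm (tens (tens X Y) Z) (tens X (tens Y Z)) (asc X Y Z)"
    and lu_iso: "\<And>X. is_iso Hom cmp idm (tens I X) X (lu X)"
    and ru_iso: "\<And>X. is_iso Hom cmp idm (tens X I) X (ru X)"
    and asc_nat: "\<And>f g h A A' B B' C C'. f \<in> Hom A A' \<Longrightarrow> g \<in> Hom B B' \<Longrightarrow> h \<in> Hom C C' \<Longrightarrow>
        cmp (asc A' B' C') (tensm (tensm f g) h) = cmp (tensm f (tensm g h)) (asc A B C)"
    and lu_nat: "\<And>f A B. f \<in> Hom A B \<Longrightarrow> cmp f (lu A) = cmp (lu B) (tensm (idm I) f)"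
    and ru_nat: "\<And>f A B. f \<in> Hom A B \<Longrightarrow> cmp f (ru A) = cmp (ru B) (tensm f (idm I))"
    and pentagon: "\<And>W X Y Z.
        cmp (asc W X (tens Y Z)) (asc (tens W X) Y Z)
        = cmp (tensm (idm W) (asc X Y Z)) (cmp (asc W (tens X Y) Z) (tensm (asc W X Y) (idm Z)))"
    and triangle: "\<And>X Y. cmp (tensm (idm X) (lu Y)) (asc X I Y) = tensm (ru X) (idm Y)"

text \<open>Closedness: each (-)\<otimes>B has a right adjoint B \<Rightarrow> (-), given by the
 object exp B C and the counit app B C : (B \<Rightarrow> C)\<otimes>B \<rightarrow> C with the universal property.\<close>

locale closed_monoidal_category = monoidal_category Hom cmp idm tens tensm I asc lu ru
  for Hom :: "'o \<Rightarrow> 'o \<Rightarrow> 'm set"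
    and cmp :: "'m \<Rightarrow> 'm \<Rightarrow> 'm"
    and idm :: "'o \<Rightarrow> 'm"
    and tens :: "'o \<Rightarrow> 'o \<Rightarrow> 'o"
    and tensm :: "'m \<Rightarrow> 'm \<Rightarrow> 'm"
    and I :: 'o
    and asc :: "'o \<Rightarrow> 'o \<Rightarrow> 'o \<Rightarrow> 'm"
    and lu :: "'o \<Rightarrow> 'm"
    and ru :: "'o \<Rightarrow> 'm" +
  fixes exp :: "'o \<Rightarrow> 'o \<Rightarrow> 'o"
    and app :: "'o \<Rightarrow> 'o \<Rightarrow> 'm"
  assumes app_Hom: "\<And>B C. app B C \<in> Hom (tens (exp B C) B) C"
    and curry_unique: "\<And>X B C f. f \<in> Hom (tens X B) C \<Longrightarrow>
        \<exists>!h. h \<in> Hom X (exp B C) \<and> cmp (app B C) (tensm h (idm B)) = f"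

definition Lam :: "('o \<Rightarrow> 'o \<Rightarrow> 'm set) \<Rightarrow> ('m \<Rightarrow> 'm \<Rightarrow> 'm) \<Rightarrow> ('o \<Rightarrow> 'm) \<Rightarrow> ('m \<Rightarrow> 'm \<Rightarrow> 'm)
    \<Rightarrow> ('o \<Rightarrow> 'o \<Rightarrow> 'o) \<Rightarrow> ('o \<Rightarrow> 'o \<Rightarrow> 'm) \<Rightarrow> 'o \<Rightarrow> 'o \<Rightarrow> 'o \<Rightarrow> 'm \<Rightarrow> 'm" where
  "Lam Hom cmp idm tensm exp app X B C f =
     (THE h. h \<in> Hom X (exp B C) \<and> cmp (app B C) (tensm h (idm B)) = f)"

locale strong_monad_closed = closed_monoidal_category Hom cmp idm tens tensm I asc lu ru exp app
  for Hom :: "'o \<Rightarrow> 'o \<Rightarrow> 'm set"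
    and cmp :: "'m \<Rightarrow> 'm \<Rightarrow> 'm"
    and idm :: "'o \<Rightarrow> 'm"
    and tens :: "'o \<Rightarrow> 'o \<Rightarrow> 'o"
    and tensm :: "'m \<Rightarrow> 'm \<Rightarrow> 'm"
    and I :: 'o
    and asc :: "'o \<Rightarrow> 'o \<Rightarrow> 'o \<Rightarrow> 'm"
    and lu :: "'o \<Rightarrow> 'm"
    and ru :: "'o \<Rightarrow> 'm"
    and exp :: "'o \<Rightarrow> 'o \<Rightarrow> 'o"
    and app :: "'o \<Rightarrow> 'o \<Rightarrow> 'm" +
  fixes Mo :: "'o \<Rightarrow> 'o"
    and Mm :: "'m \<Rightarrow> 'm"
    and eta :: "'o \<Rightarrow> 'm"
    and mu :: "'o \<Rightarrow> 'm"
    and tau :: "'o \<Rightarrow> 'o \<Rightarrow> 'm"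
  assumes Mm_Hom: "\<And>f X Y. f \<in> Hom X Y \<Longrightarrow> Mm f \<in> Hom (Mo X) (Mo Y)"
    and Mm_idm: "\<And>X. Mm (idm X) = idm (Mo X)"
    and Mm_cmp: "\<And>f g X Y Z. f \<in> Hom X Y \<Longrightarrow> g \<in> Hom Y Z \<Longrightarrow> Mm (cmp g f) = cmp (Mm g) (Mm f)"
    and eta_Hom: "\<And>X. eta X \<in> Hom X (Mo X)"
    and mu_Hom: "\<And>X. mu X \<in> Hom (Mo (Mo X)) (Mo X)"
    and eta_nat: "\<And>f X Y. f \<in> Hom X Y \<Longrightarrow> cmp (eta Y) f = cmp (Mm f) (eta X)"
    and mu_nat: "\<And>f X Y. f \<in> Hom X Y \<Longrightarrow> cmp (mu Y) (Mm (Mm f)) = cmp (Mm f) (mu X)"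
    and mu_assoc: "\<And>X. cmp (mu X) (Mm (mu X)) = cmp (mu X) (mu (Mo X))"
    and mu_eta_left: "\<And>X. cmp (mu X) (eta (Mo X)) = idm (Mo X)"
    and mu_eta_right: "\<And>X. cmp (mu X) (Mm (eta X)) = idm (Mo X)"
    and tau_Hom: "\<And>X Y. tau X Y \<in> Hom (tens (Mo X) Y) (Mo (tens X Y))"
    and tau_nat: "\<And>f g X X' Y Y'. f \<in> Hom X X' \<Longrightarrow> g \<in> Hom Y Y' \<Longrightarrow>
        cmp (tau X' Y') (tensm (Mm f) g) = cmp (Mm (tensm f g)) (tau X Y)"
    and tau_unit: "\<And>X. cmp (Mm (ru X)) (tau X I) = ru (Mo X)"
    and tau_assoc: "\<And>X Y Z.
        cmp (tau X (tens Y Z)) (asc (Mo X) Y Z)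
        = cmp (Mm (asc X Y Z)) (cmp (tau (tens X Y) Z) (tensm (tau X Y) (idm Z)))"
    and tau_eta: "\<And>X Y. cmp (tau X Y) (tensm (eta X) (idm Y)) = eta (tens X Y)"
    and tau_mu: "\<And>X Y. cmp (tau X Y) (tensm (mu X) (idm Y))
        = cmp (mu (tens X Y)) (cmp (Mm (tau X Y)) (tau (Mo X) Y))"

definition em_monoid ::
  "('o \<Rightarrow> 'o \<Rightarrow> 'm set) \<Rightarrow> ('m \<Rightarrow> 'm \<Rightarrow> 'm) \<Rightarrow> ('o \<Rightarrow> 'm)
   \<Rightarrow> ('o \<Rightarrow> 'o \<Rightarrow> 'o) \<Rightarrow> ('m \<Rightarrow> 'm \<Rightarrow> 'm) \<Rightarrow> 'o \<Rightarrow> ('o \<Rightarrow> 'o \<Rightarrow> 'o \<Rightarrow> 'm) \<Rightarrow> ('o \<Rightarrow> 'm) \<Rightarrow> ('o \<Rightarrow> 'm)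
   \<Rightarrow> ('o \<Rightarrow> 'o) \<Rightarrow> ('m \<Rightarrow> 'm) \<Rightarrow> ('o \<Rightarrow> 'm) \<Rightarrow> ('o \<Rightarrow> 'm) \<Rightarrow> ('o \<Rightarrow> 'o \<Rightarrow> 'm)
   \<Rightarrow> 'o \<Rightarrow> 'm \<Rightarrow> 'm \<Rightarrow> 'm \<Rightarrow> bool" where
  "em_monoid Hom cmp idm tens tensm I asc lu ru Mo Mm eta mu tau E a m u \<longleftrightarrow>
     \<comment> \<open>Eilenberg--Moore algebra\<close>
     a \<in> Hom (Mo E) E \<and>
     cmp a (Mm a) = cmp a (mu E) \<and>
     cmp a (eta E) = idm E \<and>
     \<comment> \<open>monoid\<close>
     m \<in> Hom (tens E E) E \<and>
     u \<in> Hom I E \<and>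
     cmp m (tensm m (idm E)) = cmp m (cmp (tensm (idm E) m) (asc E E E)) \<and>
     cmp m (tensm u (idm E)) = lu E \<and>
     cmp m (tensm (idm E) u) = ru E \<and>
     \<comment> \<open>compatibility\<close>
     cmp m (tensm a (idm E)) = cmp a (cmp (Mm m) (tau E E))"

end

theory Submission
  imports Defs
begin

context category begin
lemma iso_cancel_r:
  assumes "is_iso Hom cmp idm X Y f" "u \<in> Hom Y Z" "v \<in> Hom Y Z" "cmp u f = cmp v f"
  shows "u = v"
proof -
  from assms(1) obtain g where g: "g \<in> Hom Y X" "cmp f g = idm Y" and f: "f \<in> Hom X Y"
    unfolding is_iso_def by auto
  have "u = cmp u (cmp f g)" using g idm_right[OF assms(2)] by simp
  also have "\<dots> = cmp (cmp u f) g" using cmp_assoc[OF g(1) f assms(2)] .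
  also have "\<dots> = cmp (cmp v f) g" using assms(4) by simp
  also have "\<dots> = cmp v (cmp f g)" using cmp_assoc[OF g(1) f assms(3)] by simp
  also have "\<dots> = v" using g idm_right[OF assms(3)] by simp
  finally show ?thesis .
qed
end

context monoidal_category begin

lemma asc_Hom: "asc X Y Z \<in> Hom (tens (tens X Y) Z) (tens X (tens Y Z))"
  using asc_iso[unfolded is_iso_def] by (rule conjunct1)
lemma lu_Hom: "lu X \<in> Hom (tens I X) X"
  using lu_iso[unfolded is_iso_def] by (rule conjunct1)
lemma ru_Hom: "ru X \<in> Hom (tens X I) X"
  using ru_iso[unfolded is_iso_def] by (rule conjunct1)

lemmas tyH = cmp_Hom tensm_Hom idm_Hom asc_Hom lu_Hom ru_Hom

lemma tens_iso_id:
  assumes "is_iso Hom cmp idm X Y f"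
  shows "is_iso Hom cmp idm (tens X Z) (tens Y Z) (tensm f (idm Z))"
proof -
  from assms obtain g where g: "g \<in> Hom Y X" "cmp g f = idm X" "cmp f g = idm Y" and f: "f \<in> Hom X Y"
    unfolding is_iso_def by auto
  have "cmp (tensm g (idm Z)) (tensm f (idm Z)) = idm (tens X Z)"
    using tensm_cmp[OF f g(1) idm_Hom idm_Hom, symmetric] g(2) idm_left[OF idm_Hom] tensm_idm by simp
  moreover have "cmp (tensm f (idm Z)) (tensm g (idm Z)) = idm (tens Y Z)"
    using tensm_cmp[OF g(1) f idm_Hom idm_Hom, symmetric] g(3) idm_left[OF idm_Hom] tensm_idm by simp
  ultimately show ?thesis unfolding is_iso_def
    using tensm_Hom[OF f idm_Hom[of Z]] tensm_Hom[OF g(1) idm_Hom[of Z]] by blast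
qed

lemma cmp_iso:
  assumes "is_iso Hom cmp idm X Y f" "is_iso Hom cmp idm Y Z g"
  shows "is_iso Hom cmp idm X Z (cmp g f)"
proof -
  from assms(1) obtain f' where f': "f' \<in> Hom Y X" "cmp f' f = idm X" "cmp f f' = idm Y" and f: "f \<in> Hom X Y"
    unfolding is_iso_def by auto
  from assms(2) obtain g' where g': "g' \<in> Hom Z Y" "cmp g' g = idm Y" "cmp g g' = idm Z" and g: "g \<in> Hom Y Z"
    unfolding is_iso_def by auto
  have "cmp (cmp f' g') (cmp g f) = cmp f' (cmp g' (cmp g f))"
    using cmp_assoc[OF cmp_Hom[OF f g] g'(1) f'(1)] by simp
  also have "\<dots> = cmp f' (cmp (cmp g' g) f)" using cmp_assoc[OF f g g'(1)] by simp
  also have "\<dots> = idm X" using f f' g' idm_left by simp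
  finally have 1: "cmp (cmp f' g') (cmp g f) = idm X" .
  have "cmp (cmp g f) (cmp f' g') = cmp g (cmp f (cmp f' g'))"
    using cmp_assoc[OF cmp_Hom[OF g'(1) f'(1)] f g] by simp
  also have "\<dots> = cmp g (cmp (cmp f f') g')" using cmp_assoc[OF g'(1) f'(1) f] by simp
  also have "\<dots> = idm Z" using g g' f' idm_left by simp
  finally have 2: "cmp (cmp g f) (cmp f' g') = idm Z" .
  show ?thesis unfolding is_iso_def using 1 2 cmp_Hom[OF f g] cmp_Hom[OF g'(1) f'(1)] by blast
qed

lemma tensI_faithful:
  assumes "f \<in> Hom A B" "g \<in> Hom A B" "tensm (idm I) f = tensm (idm I) g"
  shows "f = g"
proof -
  have "cmp f (lu A) = cmp g (lu A)" using lu_nat[OF assms(1)] lu_nat[OF assms(2)] assms(3) by simp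
  then show ?thesis using iso_cancel_r[OF lu_iso assms(1,2)] by blast
qed

lemma tensm_id_cmp: "f \<in> Hom A B \<Longrightarrow> g \<in> Hom B C \<Longrightarrow> tensm (cmp g f) (idm X) = cmp (tensm g (idm X)) (tensm f (idm X))"
  using tensm_cmp[OF _ _ idm_Hom idm_Hom, where f=f and g=g] idm_left[OF idm_Hom] by simp
lemma tensm_cmp_id: "f \<in> Hom A B \<Longrightarrow> g \<in> Hom B C \<Longrightarrow> tensm (idm X) (cmp g f) = cmp (tensm (idm X) g) (tensm (idm X) f)"
  using tensm_cmp[OF idm_Hom idm_Hom, where f'=f and g'=g] idm_left[OF idm_Hom] by simp


lemma interchange:
  assumes f: "f \<in> Hom A B" and g: "g \<in> Hom C D"
  shows "cmp (tensm (idm B) g) (tensm f (idm C)) = cmp (tensm f (idm D)) (tensm (idm A) g)"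
  using tensm_cmp[OF f idm_Hom idm_Hom g] tensm_cmp[OF idm_Hom f g idm_Hom]
    idm_left[OF f] idm_right[OF f] idm_left[OF g] idm_right[OF g] by simp

lemma lu_tens: "cmp (lu (tens X Y)) (asc I X Y) = tensm (lu X) (idm Y)"
proof -
  define a1 where "a1 = tensm (asc I I X) (idm Y)"
  define a2 where "a2 = asc I (tens I X) Y"
  define a3 where "a3 = tensm (idm I) (asc I X Y)"
  define l1 where "l1 = tensm (idm I) (lu (tens X Y))"
  define b1 where "b1 = asc (tens I I) X Y"
  define b2 where "b2 = asc I I (tens X Y)"
  define L where "L = cmp (lu (tens X Y)) (asc I X Y)"
  define R where "R = tensm (lu X) (idm Y)"
  define Q where "Q = cmp a2 a1"
  have a1: "a1 \<in> Hom (tens (tens (tens I I) X) Y) (tens (tens I (tens I X)) Y)"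
    unfolding a1_def by (intro tyH)
  have a2: "a2 \<in> Hom (tens (tens I (tens I X)) Y) (tens I (tens (tens I X) Y))"
    unfolding a2_def by (intro tyH)
  have a3: "a3 \<in> Hom (tens I (tens (tens I X) Y)) (tens I (tens I (tens X Y)))"
    unfolding a3_def by (intro tyH)
  have l1: "l1 \<in> Hom (tens I (tens I (tens X Y))) (tens I (tens X Y))"
    unfolding l1_def by (intro tyH)
  have b1: "b1 \<in> Hom (tens (tens (tens I I) X) Y) (tens (tens I I) (tens X Y))"
    unfolding b1_def by (intro tyH)
  have b2: "b2 \<in> Hom (tens (tens I I) (tens X Y)) (tens I (tens I (tens X Y)))"
    unfolding b2_def by (intro tyH)
  have L: "L \<in> Hom (tens (tens I X) Y) (tens X Y)" unfolding L_def by (rule cmp_Hom[OF asc_Hom lu_Hom])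
  have R: "R \<in> Hom (tens (tens I X) Y) (tens X Y)" unfolding R_def by (intro tyH)
  have Qiso: "is_iso Hom cmp idm (tens (tens (tens I I) X) Y) (tens I (tens (tens I X) Y)) Q"
    unfolding Q_def a1_def a2_def by (rule cmp_iso[OF tens_iso_id[OF asc_iso] asc_iso])
  have riY: "tensm (ru I) (idm X) \<in> Hom (tens (tens I I) X) (tens I X)" by (intro tyH)
  have lX: "tensm (idm I) (lu X) \<in> Hom (tens I (tens I X)) (tens I X)" by (intro tyH)
  have "cmp (tensm (idm I) L) Q = cmp (cmp l1 a3) (cmp a2 a1)"
    unfolding L_def Q_def l1_def a3_def by (rule arg_cong2[where f=cmp, OF tensm_cmp_id[OF asc_Hom lu_Hom] refl])
  also have "\<dots> = cmp l1 (cmp a3 (cmp a2 a1))"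
    using cmp_assoc[OF cmp_Hom[OF a1 a2] a3 l1] by simp
  also have "\<dots> = cmp l1 (cmp b2 b1)"
    unfolding a1_def a2_def a3_def b1_def b2_def using pentagon by simp
  also have "\<dots> = cmp (cmp l1 b2) b1" using cmp_assoc[OF b1 b2 l1] .
  also have "\<dots> = cmp (tensm (ru I) (tensm (idm X) (idm Y))) b1"
    unfolding l1_def b2_def using triangle tensm_idm by simp
  also have "\<dots> = cmp (asc I X Y) (tensm (tensm (ru I) (idm X)) (idm Y))"
    unfolding b1_def using asc_nat[OF ru_Hom idm_Hom idm_Hom] by simp
  also have "\<dots> = cmp (asc I X Y) (tensm (cmp (tensm (idm I) (lu X)) (asc I I X)) (idm Y))"
    using triangle by simp
  also have "\<dots> = cmp (asc I X Y) (cmp (tensm (tensm (idm I) (lu X)) (idm Y)) a1)"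
    unfolding a1_def using tensm_id_cmp[OF asc_Hom lX] by simp
  also have "\<dots> = cmp (cmp (asc I X Y) (tensm (tensm (idm I) (lu X)) (idm Y))) a1"
    using cmp_assoc[OF a1 tensm_Hom[OF lX idm_Hom] asc_Hom] .
  also have "\<dots> = cmp (cmp (tensm (idm I) R) a2) a1"
    unfolding R_def a2_def using asc_nat[OF idm_Hom lu_Hom idm_Hom] by simp
  also have "\<dots> = cmp (tensm (idm I) R) Q"
    unfolding Q_def using cmp_assoc[OF a1 a2 tensm_Hom[OF idm_Hom R]] by simp
  finally have "tensm (idm I) L = tensm (idm I) R"
    using iso_cancel_r[OF Qiso tensm_Hom[OF idm_Hom L] tensm_Hom[OF idm_Hom R]] by blast
  then show ?thesis using tensI_faithful[OF L R] unfolding L_def R_def by blast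
qed

end

context closed_monoidal_category begin

lemma Lam_prop:
  assumes "f \<in> Hom (tens X B) C"
  shows "Lam Hom cmp idm tensm exp app X B C f \<in> Hom X (exp B C)"
    and "cmp (app B C) (tensm (Lam Hom cmp idm tensm exp app X B C f) (idm B)) = f"
  using theI'[OF curry_unique[OF assms]] unfolding Lam_def by simp_all

lemma exp_ext:
  assumes "h1 \<in> Hom X (exp B C)" "h2 \<in> Hom X (exp B C)"
    "cmp (app B C) (tensm h1 (idm B)) = cmp (app B C) (tensm h2 (idm B))"
  shows "h1 = h2"
proof -
  have f: "cmp (app B C) (tensm h1 (idm B)) \<in> Hom (tens X B) C"
    by (rule cmp_Hom[OF tensm_Hom[OF assms(1) idm_Hom] app_Hom])
  from curry_unique[OF f] have u: "\<And>h. h \<in> Hom X (exp B C) \<Longrightarrow> cmp (app B C) (tensm h (idm B)) = cmp (app B C) (tensm h1 (idm B)) \<Longrightarrow> h = h1"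
    using assms(1) by (metis (no_types, lifting))
  show ?thesis using u[OF assms(2)] assms(3) by simp
qed

lemma ev_cmp:
  assumes "h \<in> Hom Y (exp B C)" "g \<in> Hom X Y"
  shows "cmp (app B C) (tensm (cmp h g) (idm B)) = cmp (cmp (app B C) (tensm h (idm B))) (tensm g (idm B))"
  using tensm_id_cmp[OF assms(2,1)] cmp_assoc[OF tensm_Hom[OF assms(2) idm_Hom] tensm_Hom[OF assms(1) idm_Hom] app_Hom]
  by simp

end

context strong_monad_closed begin

lemma main:
  fixes A
  defines "B \<equiv> Mo A"
  defines "E \<equiv> exp B B"
  defines "ev \<equiv> app B B"
  defines "p \<equiv> cmp (mu A) (cmp (Mm ev) (tau E B))"
  defines "k \<equiv> cmp ev (cmp (tensm (idm E) ev) (asc E E B))"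
  defines "cm \<equiv> Lam Hom cmp idm tensm exp app (tens E E) B B k"
  defines "ident \<equiv> Lam Hom cmp idm tensm exp app I B B (lu B)"
  defines "a \<equiv> Lam Hom cmp idm tensm exp app (Mo E) B B p"
  shows "em_monoid Hom cmp idm tens tensm I asc lu ru Mo Mm eta mu tau E a cm ident"
proof -
  have ev: "ev \<in> Hom (tens E B) B" unfolding ev_def E_def by (rule app_Hom)
  have mu: "mu A \<in> Hom (Mo B) B" unfolding B_def by (rule mu_Hom)
  have Mev: "Mm ev \<in> Hom (Mo (tens E B)) (Mo B)" by (rule Mm_Hom[OF ev])
  have t1: "tau E B \<in> Hom (tens (Mo E) B) (Mo (tens E B))" by (rule tau_Hom)
  have p: "p \<in> Hom (tens (Mo E) B) B" unfolding p_def by (rule cmp_Hom[OF cmp_Hom[OF t1 Mev] mu])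
  have k: "k \<in> Hom (tens (tens E E) B) B" unfolding k_def
    by (rule cmp_Hom[OF cmp_Hom[OF asc_Hom tensm_Hom[OF idm_Hom ev]] ev])
  have a: "a \<in> Hom (Mo E) E" and a_eq: "cmp ev (tensm a (idm B)) = p"
    using Lam_prop[OF p, folded E_def ev_def] unfolding a_def by auto
  have cm: "cm \<in> Hom (tens E E) E" and cm_eq: "cmp ev (tensm cm (idm B)) = k"
    using Lam_prop[OF k, folded E_def ev_def] unfolding cm_def by auto
  have ident: "ident \<in> Hom I E" and ident_eq: "cmp ev (tensm ident (idm B)) = lu B"
    using Lam_prop[OF lu_Hom[of B], folded E_def ev_def] unfolding ident_def by auto
  have evc: "\<And>h g X Y. h \<in> Hom Y E \<Longrightarrow> g \<in> Hom X Y \<Longrightarrow>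
     cmp ev (tensm (cmp h g) (idm B)) = cmp (cmp ev (tensm h (idm B))) (tensm g (idm B))"
    unfolding ev_def E_def by (rule ev_cmp)
  have ext: "\<And>h1 h2 X. h1 \<in> Hom X E \<Longrightarrow> h2 \<in> Hom X E \<Longrightarrow>
     cmp ev (tensm h1 (idm B)) = cmp ev (tensm h2 (idm B)) \<Longrightarrow> h1 = h2"
    unfolding ev_def E_def by (rule exp_ext)
  have Ma: "Mm a \<in> Hom (Mo (Mo E)) (Mo E)" by (rule Mm_Hom[OF a])
  have muE: "mu E \<in> Hom (Mo (Mo E)) (Mo E)" by (rule mu_Hom)
  have Mat: "tensm (Mm a) (idm B) \<in> Hom (tens (Mo (Mo E)) B) (tens (Mo E) B)" by (rule tensm_Hom[OF Ma idm_Hom])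
  have muEt: "tensm (mu E) (idm B) \<in> Hom (tens (Mo (Mo E)) B) (tens (Mo E) B)" by (rule tensm_Hom[OF muE idm_Hom])
  have t2: "tau (Mo E) B \<in> Hom (tens (Mo (Mo E)) B) (Mo (tens (Mo E) B))" by (rule tau_Hom)
  have at: "tensm a (idm B) \<in> Hom (tens (Mo E) B) (tens E B)" by (rule tensm_Hom[OF a idm_Hom])
  have Mat2: "Mm (tensm a (idm B)) \<in> Hom (Mo (tens (Mo E) B)) (Mo (tens E B))" by (rule Mm_Hom[OF at])
  have MMev: "Mm (Mm ev) \<in> Hom (Mo (Mo (tens E B))) (Mo (Mo B))" by (rule Mm_Hom[OF Mev])
  have Mt1: "Mm (tau E B) \<in> Hom (Mo (tens (Mo E) B)) (Mo (Mo (tens E B)))" by (rule Mm_Hom[OF t1])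
  have Mmu: "Mm (mu A) \<in> Hom (Mo (Mo B)) (Mo B)" by (rule Mm_Hom[OF mu])
  have muB: "mu B \<in> Hom (Mo (Mo B)) (Mo B)" by (rule mu_Hom)
  have muEB: "mu (tens E B) \<in> Hom (Mo (Mo (tens E B))) (Mo (tens E B))" by (rule mu_Hom)
  have alg1: "cmp a (Mm a) = cmp a (mu E)"
  proof (rule ext[OF cmp_Hom[OF Ma a] cmp_Hom[OF muE a]])
    have "cmp ev (tensm (cmp a (Mm a)) (idm B)) = cmp p (tensm (Mm a) (idm B))"
      using evc[OF a Ma] a_eq by simp
    also have "\<dots> = cmp (mu A) (cmp (Mm ev) (cmp (tau E B) (tensm (Mm a) (idm B))))"
      unfolding p_def using cmp_assoc[OF Mat t1 Mev] cmp_assoc[OF Mat cmp_Hom[OF t1 Mev] mu] by simp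
    also have "\<dots> = cmp (mu A) (cmp (Mm ev) (cmp (Mm (tensm a (idm B))) (tau (Mo E) B)))"
      using tau_nat[OF a idm_Hom] Mm_idm by simp
    also have "\<dots> = cmp (mu A) (cmp (Mm p) (tau (Mo E) B))"
      using cmp_assoc[OF t2 Mat2 Mev] Mm_cmp[OF at ev] a_eq by simp
    also have "\<dots> = cmp (mu A) (cmp (cmp (Mm (mu A)) (cmp (Mm (Mm ev)) (Mm (tau E B)))) (tau (Mo E) B))"
      unfolding p_def using Mm_cmp[OF cmp_Hom[OF t1 Mev] mu] Mm_cmp[OF t1 Mev] by simp
    also have "\<dots> = cmp (cmp (mu A) (Mm (mu A))) (cmp (Mm (Mm ev)) (cmp (Mm (tau E B)) (tau (Mo E) B)))"
      using cmp_assoc[OF t2 Mt1 MMev] cmp_assoc[OF t2 cmp_Hom[OF Mt1 MMev] Mmu]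
        cmp_assoc[OF cmp_Hom[OF t2 Mt1] MMev Mmu] cmp_assoc[OF cmp_Hom[OF cmp_Hom[OF t2 Mt1] MMev] Mmu mu]
      by simp
    also have "\<dots> = cmp (mu A) (cmp (cmp (mu B) (Mm (Mm ev))) (cmp (Mm (tau E B)) (tau (Mo E) B)))"
      using mu_assoc[of A] cmp_assoc[OF cmp_Hom[OF t2 Mt1] MMev muB] cmp_assoc[OF cmp_Hom[OF cmp_Hom[OF t2 Mt1] MMev] muB mu]
      unfolding B_def by simp
    also have "\<dots> = cmp (mu A) (cmp (Mm ev) (cmp (mu (tens E B)) (cmp (Mm (tau E B)) (tau (Mo E) B))))"
      using mu_nat[OF ev] cmp_assoc[OF cmp_Hom[OF t2 Mt1] muEB Mev] by simp
    also have "\<dots> = cmp (mu A) (cmp (Mm ev) (cmp (tau E B) (tensm (mu E) (idm B))))"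
      using tau_mu[of E B] by simp
    also have "\<dots> = cmp p (tensm (mu E) (idm B))"
      unfolding p_def using cmp_assoc[OF muEt t1 Mev] cmp_assoc[OF muEt cmp_Hom[OF t1 Mev] mu] by simp
    also have "\<dots> = cmp ev (tensm (cmp a (mu E)) (idm B))"
      using evc[OF a muE] a_eq by simp
    finally show "cmp ev (tensm (cmp a (Mm a)) (idm B)) = cmp ev (tensm (cmp a (mu E)) (idm B))" .
  qed
  have etaE: "eta E \<in> Hom E (Mo E)" by (rule eta_Hom)
  have alg2: "cmp a (eta E) = idm E"
  proof (rule ext[OF cmp_Hom[OF etaE a] idm_Hom])
    have "cmp ev (tensm (cmp a (eta E)) (idm B)) = cmp p (tensm (eta E) (idm B))"
      using evc[OF a etaE] a_eq by simp
    also have "\<dots> = cmp (mu A) (cmp (Mm ev) (cmp (tau E B) (tensm (eta E) (idm B))))"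
      unfolding p_def using cmp_assoc[OF tensm_Hom[OF etaE idm_Hom] t1 Mev]
        cmp_assoc[OF tensm_Hom[OF etaE idm_Hom] cmp_Hom[OF t1 Mev] mu] by simp
    also have "\<dots> = cmp (mu A) (cmp (Mm ev) (eta (tens E B)))" using tau_eta by simp
    also have "\<dots> = cmp (cmp (mu A) (eta B)) ev"
      using eta_nat[OF ev] cmp_assoc[OF ev eta_Hom mu] by simp
    also have "\<dots> = ev" using mu_eta_left[of A] idm_left[OF ev] unfolding B_def by simp
    also have "\<dots> = cmp ev (tensm (idm E) (idm B))" using tensm_idm idm_right[OF ev] by simp
    finally show "cmp ev (tensm (cmp a (eta E)) (idm B)) = cmp ev (tensm (idm E) (idm B))" .
  qed
  have Mcm: "Mm cm \<in> Hom (Mo (tens E E)) (Mo E)" by (rule Mm_Hom[OF cm])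
  have tEE: "tau E E \<in> Hom (tens (Mo E) E) (Mo (tens E E))" by (rule tau_Hom)
  have tEEB: "tau (tens E E) B \<in> Hom (tens (Mo (tens E E)) B) (Mo (tens (tens E E) B))" by (rule tau_Hom)
  have tEEt: "tensm (tau E E) (idm B) \<in> Hom (tens (tens (Mo E) E) B) (tens (Mo (tens E E)) B)"
    by (rule tensm_Hom[OF tEE idm_Hom])
  have tE_EB: "tau E (tens E B) \<in> Hom (tens (Mo E) (tens E B)) (Mo (tens E (tens E B)))" by (rule tau_Hom)
  have ascM: "asc (Mo E) E B \<in> Hom (tens (tens (Mo E) E) B) (tens (Mo E) (tens E B))" by (rule asc_Hom)
  have ascE: "asc E E B \<in> Hom (tens (tens E E) B) (tens E (tens E B))" by (rule asc_Hom)
  have Masc: "Mm (asc E E B) \<in> Hom (Mo (tens (tens E E) B)) (Mo (tens E (tens E B)))" by (rule Mm_Hom[OF ascE])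
  have idev: "tensm (idm E) ev \<in> Hom (tens E (tens E B)) (tens E B)" by (rule tensm_Hom[OF idm_Hom ev])
  have Midev: "Mm (tensm (idm E) ev) \<in> Hom (Mo (tens E (tens E B))) (Mo (tens E B))" by (rule Mm_Hom[OF idev])
  have idMev: "tensm (idm (Mo E)) ev \<in> Hom (tens (Mo E) (tens E B)) (tens (Mo E) B)" by (rule tensm_Hom[OF idm_Hom ev])
  have aE: "tensm a (idm E) \<in> Hom (tens (Mo E) E) (tens E E)" by (rule tensm_Hom[OF a idm_Hom])
  have aEt: "tensm (tensm a (idm E)) (idm B) \<in> Hom (tens (tens (Mo E) E) B) (tens (tens E E) B)"
    by (rule tensm_Hom[OF aE idm_Hom])
  have aEB: "tensm a (idm (tens E B)) \<in> Hom (tens (Mo E) (tens E B)) (tens E (tens E B))"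
    by (rule tensm_Hom[OF a idm_Hom])
  have Y: "cmp (tau (tens E E) B) (tensm (tau E E) (idm B)) \<in> Hom (tens (tens (Mo E) E) B) (Mo (tens (tens E E) B))"
    by (rule cmp_Hom[OF tEEt tEEB])
  have cmt: "tensm cm (idm B) \<in> Hom (tens (tens E E) B) (tens E B)" by (rule tensm_Hom[OF cm idm_Hom])
  have Mcmt: "Mm (tensm cm (idm B)) \<in> Hom (Mo (tens (tens E E) B)) (Mo (tens E B))" by (rule Mm_Hom[OF cmt])
  have McmB: "tensm (Mm cm) (idm B) \<in> Hom (tens (Mo (tens E E)) B) (tens (Mo E) B)" by (rule tensm_Hom[OF Mcm idm_Hom])
  have kid: "cmp (tensm (idm E) ev) (asc E E B) \<in> Hom (tens (tens E E) B) (tens E B)" by (rule cmp_Hom[OF ascE idev])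
  have Mk: "Mm k = cmp (Mm ev) (cmp (Mm (tensm (idm E) ev)) (Mm (asc E E B)))"
    unfolding k_def using Mm_cmp[OF kid ev] Mm_cmp[OF ascE idev] by simp
  have compat: "cmp cm (tensm a (idm E)) = cmp a (cmp (Mm cm) (tau E E))"
  proof (rule ext[OF cmp_Hom[OF aE cm] cmp_Hom[OF cmp_Hom[OF tEE Mcm] a]])
    have "cmp ev (tensm (cmp cm (tensm a (idm E))) (idm B)) = cmp k (tensm (tensm a (idm E)) (idm B))"
      using evc[OF cm aE] cm_eq by simp
    also have "\<dots> = cmp ev (cmp (tensm (idm E) ev) (cmp (asc E E B) (tensm (tensm a (idm E)) (idm B))))"
      unfolding k_def using cmp_assoc[OF aEt cmp_Hom[OF ascE idev] ev] cmp_assoc[OF aEt ascE idev] by simp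
    also have "\<dots> = cmp ev (cmp (tensm (idm E) ev) (cmp (tensm a (idm (tens E B))) (asc (Mo E) E B)))"
      using asc_nat[OF a idm_Hom idm_Hom, of E B] tensm_idm by simp
    also have "\<dots> = cmp ev (cmp (tensm a (idm B)) (cmp (tensm (idm (Mo E)) ev) (asc (Mo E) E B)))"
      using interchange[OF a ev] cmp_assoc[OF ascM aEB idev] cmp_assoc[OF ascM idMev at] by simp
    also have "\<dots> = cmp p (cmp (tensm (idm (Mo E)) ev) (asc (Mo E) E B))"
      using cmp_assoc[OF cmp_Hom[OF ascM idMev] at ev] a_eq by simp
    also have "\<dots> = cmp (mu A) (cmp (Mm ev) (cmp (tau E B) (cmp (tensm (idm (Mo E)) ev) (asc (Mo E) E B))))"
      unfolding p_def using cmp_assoc[OF cmp_Hom[OF ascM idMev] t1 Mev]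
        cmp_assoc[OF cmp_Hom[OF ascM idMev] cmp_Hom[OF t1 Mev] mu] by simp
    also have "\<dots> = cmp (mu A) (cmp (Mm ev) (cmp (Mm (tensm (idm E) ev)) (cmp (tau E (tens E B)) (asc (Mo E) E B))))"
      using tau_nat[OF idm_Hom[of E] ev] Mm_idm cmp_assoc[OF ascM idMev t1] cmp_assoc[OF ascM tE_EB Midev] by simp
    also have "\<dots> = cmp (mu A) (cmp (Mm ev) (cmp (Mm (tensm (idm E) ev)) (cmp (Mm (asc E E B)) (cmp (tau (tens E E) B) (tensm (tau E E) (idm B))))))"
      using tau_assoc[of E E B] by simp
    also have "\<dots> = cmp (mu A) (cmp (Mm k) (cmp (tau (tens E E) B) (tensm (tau E E) (idm B))))"
      unfolding Mk using cmp_assoc[OF Y Masc Midev] cmp_assoc[OF Y cmp_Hom[OF Masc Midev] Mev] by simp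
    finally have L: "cmp ev (tensm (cmp cm (tensm a (idm E))) (idm B)) = cmp (mu A) (cmp (Mm k) (cmp (tau (tens E E) B) (tensm (tau E E) (idm B))))" .
    have "cmp ev (tensm (cmp a (cmp (Mm cm) (tau E E))) (idm B)) = cmp p (tensm (cmp (Mm cm) (tau E E)) (idm B))"
      using evc[OF a cmp_Hom[OF tEE Mcm]] a_eq by simp
    also have "\<dots> = cmp p (cmp (tensm (Mm cm) (idm B)) (tensm (tau E E) (idm B)))"
      using tensm_id_cmp[OF tEE Mcm] by simp
    also have "\<dots> = cmp (mu A) (cmp (Mm ev) (cmp (tau E B) (cmp (tensm (Mm cm) (idm B)) (tensm (tau E E) (idm B)))))"
      unfolding p_def using cmp_assoc[OF cmp_Hom[OF tEEt McmB] t1 Mev]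
        cmp_assoc[OF cmp_Hom[OF tEEt McmB] cmp_Hom[OF t1 Mev] mu] by simp
    also have "\<dots> = cmp (mu A) (cmp (Mm ev) (cmp (Mm (tensm cm (idm B))) (cmp (tau (tens E E) B) (tensm (tau E E) (idm B)))))"
      using tau_nat[OF cm idm_Hom[of B]] cmp_assoc[OF tEEt McmB t1] cmp_assoc[OF tEEt tEEB Mcmt] by simp
    also have "\<dots> = cmp (mu A) (cmp (Mm k) (cmp (tau (tens E E) B) (tensm (tau E E) (idm B))))"
      using Mm_cmp[OF cmt ev] cm_eq cmp_assoc[OF Y Mcmt Mev] by simp
    finally show "cmp ev (tensm (cmp cm (tensm a (idm E))) (idm B)) = cmp ev (tensm (cmp a (cmp (Mm cm) (tau E E))) (idm B))"
      using L by simp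
  qed
  have identE: "tensm ident (idm E) \<in> Hom (tens I E) (tens E E)" by (rule tensm_Hom[OF ident idm_Hom])
  have identEt: "tensm (tensm ident (idm E)) (idm B) \<in> Hom (tens (tens I E) B) (tens (tens E E) B)"
    by (rule tensm_Hom[OF identE idm_Hom])
  have ascI: "asc I E B \<in> Hom (tens (tens I E) B) (tens I (tens E B))" by (rule asc_Hom)
  have identEB: "tensm ident (idm (tens E B)) \<in> Hom (tens I (tens E B)) (tens E (tens E B))"
    by (rule tensm_Hom[OF ident idm_Hom])
  have Iev: "tensm (idm I) ev \<in> Hom (tens I (tens E B)) (tens I B)" by (rule tensm_Hom[OF idm_Hom ev])
  have identt: "tensm ident (idm B) \<in> Hom (tens I B) (tens E B)" by (rule tensm_Hom[OF ident idm_Hom])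
  have lunit: "cmp cm (tensm ident (idm E)) = lu E"
  proof (rule ext[OF cmp_Hom[OF identE cm] lu_Hom])
    have "cmp ev (tensm (cmp cm (tensm ident (idm E))) (idm B)) = cmp k (tensm (tensm ident (idm E)) (idm B))"
      using evc[OF cm identE] cm_eq by simp
    also have "\<dots> = cmp ev (cmp (tensm (idm E) ev) (cmp (asc E E B) (tensm (tensm ident (idm E)) (idm B))))"
      unfolding k_def using cmp_assoc[OF identEt cmp_Hom[OF ascE idev] ev] cmp_assoc[OF identEt ascE idev] by simp
    also have "\<dots> = cmp ev (cmp (tensm (idm E) ev) (cmp (tensm ident (idm (tens E B))) (asc I E B)))"
      using asc_nat[OF ident idm_Hom idm_Hom, of E B] tensm_idm by simp
    also have "\<dots> = cmp ev (cmp (tensm ident (idm B)) (cmp (tensm (idm I) ev) (asc I E B)))"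
      using interchange[OF ident ev] cmp_assoc[OF ascI identEB idev] cmp_assoc[OF ascI Iev identt] by simp
    also have "\<dots> = cmp (lu B) (cmp (tensm (idm I) ev) (asc I E B))"
      using cmp_assoc[OF cmp_Hom[OF ascI Iev] identt ev] ident_eq by simp
    also have "\<dots> = cmp ev (cmp (lu (tens E B)) (asc I E B))"
      using lu_nat[OF ev] cmp_assoc[OF ascI Iev lu_Hom] cmp_assoc[OF ascI lu_Hom ev] by simp
    also have "\<dots> = cmp ev (tensm (lu E) (idm B))" using lu_tens by simp
    finally show "cmp ev (tensm (cmp cm (tensm ident (idm E))) (idm B)) = cmp ev (tensm (lu E) (idm B))" .
  qed
  have Eident: "tensm (idm E) ident \<in> Hom (tens E I) (tens E E)" by (rule tensm_Hom[OF idm_Hom ident])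
  have Eidentt: "tensm (tensm (idm E) ident) (idm B) \<in> Hom (tens (tens E I) B) (tens (tens E E) B)"
    by (rule tensm_Hom[OF Eident idm_Hom])
  have ascEI: "asc E I B \<in> Hom (tens (tens E I) B) (tens E (tens I B))" by (rule asc_Hom)
  have Eidentt2: "tensm (idm E) (tensm ident (idm B)) \<in> Hom (tens E (tens I B)) (tens E (tens E B))"
    by (rule tensm_Hom[OF idm_Hom identt])
  have runit: "cmp cm (tensm (idm E) ident) = ru E"
  proof (rule ext[OF cmp_Hom[OF Eident cm] ru_Hom])
    have "cmp ev (tensm (cmp cm (tensm (idm E) ident)) (idm B)) = cmp k (tensm (tensm (idm E) ident) (idm B))"
      using evc[OF cm Eident] cm_eq by simp
    also have "\<dots> = cmp ev (cmp (tensm (idm E) ev) (cmp (asc E E B) (tensm (tensm (idm E) ident) (idm B))))"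
      unfolding k_def using cmp_assoc[OF Eidentt cmp_Hom[OF ascE idev] ev] cmp_assoc[OF Eidentt ascE idev] by simp
    also have "\<dots> = cmp ev (cmp (tensm (idm E) ev) (cmp (tensm (idm E) (tensm ident (idm B))) (asc E I B)))"
      using asc_nat[OF idm_Hom ident idm_Hom, of E B] by simp
    also have "\<dots> = cmp ev (cmp (tensm (idm E) (lu B)) (asc E I B))"
      using cmp_assoc[OF ascEI Eidentt2 idev] tensm_cmp_id[OF identt ev] ident_eq by simp
    also have "\<dots> = cmp ev (tensm (ru E) (idm B))" using triangle by simp
    finally show "cmp ev (tensm (cmp cm (tensm (idm E) ident)) (idm B)) = cmp ev (tensm (ru E) (idm B))" .
  qed
  have cmE: "tensm cm (idm E) \<in> Hom (tens (tens E E) E) (tens E E)" by (rule tensm_Hom[OF cm idm_Hom])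
  have cmEt: "tensm (tensm cm (idm E)) (idm B) \<in> Hom (tens (tens (tens E E) E) B) (tens (tens E E) B)"
    by (rule tensm_Hom[OF cmE idm_Hom])
  have P2: "asc (tens E E) E B \<in> Hom (tens (tens (tens E E) E) B) (tens (tens E E) (tens E B))" by (rule asc_Hom)
  have cmEB: "tensm cm (idm (tens E B)) \<in> Hom (tens (tens E E) (tens E B)) (tens E (tens E B))"
    by (rule tensm_Hom[OF cm idm_Hom])
  have EEev: "tensm (idm (tens E E)) ev \<in> Hom (tens (tens E E) (tens E B)) (tens (tens E E) B)"
    by (rule tensm_Hom[OF idm_Hom ev])
  have P1: "asc E E (tens E B) \<in> Hom (tens (tens E E) (tens E B)) (tens E (tens E (tens E B)))" by (rule asc_Hom)
  have Eidev: "tensm (idm E) (tensm (idm E) ev) \<in> Hom (tens E (tens E (tens E B))) (tens E (tens E B))"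
    by (rule tensm_Hom[OF idm_Hom idev])
  have evidev: "cmp ev (tensm (idm E) ev) \<in> Hom (tens E (tens E B)) B" by (rule cmp_Hom[OF idev ev])
  have Ecm: "tensm (idm E) cm \<in> Hom (tens E (tens E E)) (tens E E)" by (rule tensm_Hom[OF idm_Hom cm])
  have ascEEE: "asc E E E \<in> Hom (tens (tens E E) E) (tens E (tens E E))" by (rule asc_Hom)
  have ascEEEt: "tensm (asc E E E) (idm B) \<in> Hom (tens (tens (tens E E) E) B) (tens (tens E (tens E E)) B)"
    by (rule tensm_Hom[OF ascEEE idm_Hom])
  have Ecmt: "tensm (tensm (idm E) cm) (idm B) \<in> Hom (tens (tens E (tens E E)) B) (tens (tens E E) B)"
    by (rule tensm_Hom[OF Ecm idm_Hom])
  have P3: "asc E (tens E E) B \<in> Hom (tens (tens E (tens E E)) B) (tens E (tens (tens E E) B))" by (rule asc_Hom)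
  have Ecmt2: "tensm (idm E) (tensm cm (idm B)) \<in> Hom (tens E (tens (tens E E) B)) (tens E (tens E B))"
    by (rule tensm_Hom[OF idm_Hom cmt])
  have EascE: "tensm (idm E) (asc E E B) \<in> Hom (tens E (tens (tens E E) B)) (tens E (tens E (tens E B)))"
    by (rule tensm_Hom[OF idm_Hom ascE])
  have Ek: "tensm (idm E) k \<in> Hom (tens E (tens (tens E E) B)) (tens E B)" by (rule tensm_Hom[OF idm_Hom k])
  have X: "cmp (tensm (idm E) cm) (asc E E E) \<in> Hom (tens (tens E E) E) (tens E E)" by (rule cmp_Hom[OF ascEEE Ecm])
  have massoc: "cmp cm (tensm cm (idm E)) = cmp cm (cmp (tensm (idm E) cm) (asc E E E))"
  proof (rule ext[OF cmp_Hom[OF cmE cm] cmp_Hom[OF X cm]])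
    have "cmp ev (tensm (cmp cm (tensm cm (idm E))) (idm B)) = cmp k (tensm (tensm cm (idm E)) (idm B))"
      using evc[OF cm cmE] cm_eq by simp
    also have "\<dots> = cmp ev (cmp (tensm (idm E) ev) (cmp (asc E E B) (tensm (tensm cm (idm E)) (idm B))))"
      unfolding k_def using cmp_assoc[OF cmEt cmp_Hom[OF ascE idev] ev] cmp_assoc[OF cmEt ascE idev] by simp
    also have "\<dots> = cmp ev (cmp (tensm (idm E) ev) (cmp (tensm cm (idm (tens E B))) (asc (tens E E) E B)))"
      using asc_nat[OF cm idm_Hom idm_Hom, of E B] tensm_idm by simp
    also have "\<dots> = cmp ev (cmp (tensm cm (idm B)) (cmp (tensm (idm (tens E E)) ev) (asc (tens E E) E B)))"
      using interchange[OF cm ev] cmp_assoc[OF P2 cmEB idev] cmp_assoc[OF P2 EEev cmt] by simp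
    also have "\<dots> = cmp k (cmp (tensm (idm (tens E E)) ev) (asc (tens E E) E B))"
      using cmp_assoc[OF cmp_Hom[OF P2 EEev] cmt ev] cm_eq by simp
    also have "\<dots> = cmp ev (cmp (tensm (idm E) ev) (cmp (asc E E B) (cmp (tensm (idm (tens E E)) ev) (asc (tens E E) E B))))"
      unfolding k_def using cmp_assoc[OF cmp_Hom[OF P2 EEev] cmp_Hom[OF ascE idev] ev]
        cmp_assoc[OF cmp_Hom[OF P2 EEev] ascE idev] by simp
    also have "\<dots> = cmp ev (cmp (tensm (idm E) ev) (cmp (tensm (idm E) (tensm (idm E) ev)) (cmp (asc E E (tens E B)) (asc (tens E E) E B))))"
      using asc_nat[OF idm_Hom[of E] idm_Hom[of E] ev] tensm_idm cmp_assoc[OF P2 EEev ascE] cmp_assoc[OF P2 P1 Eidev] by simp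
    also have "\<dots> = cmp ev (cmp (tensm (idm E) (cmp ev (tensm (idm E) ev))) (cmp (asc E E (tens E B)) (asc (tens E E) E B)))"
      using tensm_cmp_id[OF idev ev] cmp_assoc[OF cmp_Hom[OF P2 P1] Eidev idev] by simp
    finally have L: "cmp ev (tensm (cmp cm (tensm cm (idm E))) (idm B)) = cmp ev (cmp (tensm (idm E) (cmp ev (tensm (idm E) ev))) (cmp (asc E E (tens E B)) (asc (tens E E) E B)))" .
    have "cmp ev (tensm (cmp cm (cmp (tensm (idm E) cm) (asc E E E))) (idm B)) = cmp k (tensm (cmp (tensm (idm E) cm) (asc E E E)) (idm B))"
      using evc[OF cm X] cm_eq by simp
    also have "\<dots> = cmp k (cmp (tensm (tensm (idm E) cm) (idm B)) (tensm (asc E E E) (idm B)))"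
      using tensm_id_cmp[OF ascEEE Ecm] by simp
    also have "\<dots> = cmp ev (cmp (tensm (idm E) ev) (cmp (asc E E B) (cmp (tensm (tensm (idm E) cm) (idm B)) (tensm (asc E E E) (idm B)))))"
      unfolding k_def using cmp_assoc[OF cmp_Hom[OF ascEEEt Ecmt] cmp_Hom[OF ascE idev] ev]
        cmp_assoc[OF cmp_Hom[OF ascEEEt Ecmt] ascE idev] by simp
    also have "\<dots> = cmp ev (cmp (tensm (idm E) ev) (cmp (tensm (idm E) (tensm cm (idm B))) (cmp (asc E (tens E E) B) (tensm (asc E E E) (idm B)))))"
      using asc_nat[OF idm_Hom[of E] cm idm_Hom[of B]] cmp_assoc[OF ascEEEt Ecmt ascE] cmp_assoc[OF ascEEEt P3 Ecmt2] by simp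
    also have "\<dots> = cmp ev (cmp (tensm (idm E) k) (cmp (asc E (tens E E) B) (tensm (asc E E E) (idm B))))"
      using tensm_cmp_id[OF cmt ev] cm_eq cmp_assoc[OF cmp_Hom[OF ascEEEt P3] Ecmt2 idev] by simp
    also have "\<dots> = cmp ev (cmp (tensm (idm E) (cmp ev (tensm (idm E) ev))) (cmp (tensm (idm E) (asc E E B)) (cmp (asc E (tens E E) B) (tensm (asc E E E) (idm B)))))"
    proof -
      have "k = cmp (cmp ev (tensm (idm E) ev)) (asc E E B)" unfolding k_def using cmp_assoc[OF ascE idev ev] .
      then have "tensm (idm E) k = cmp (tensm (idm E) (cmp ev (tensm (idm E) ev))) (tensm (idm E) (asc E E B))"
        using tensm_cmp_id[OF ascE evidev] by simp
      then show ?thesis using cmp_assoc[OF cmp_Hom[OF ascEEEt P3] EascE tensm_Hom[OF idm_Hom evidev]] by simp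
    qed
    also have "\<dots> = cmp ev (cmp (tensm (idm E) (cmp ev (tensm (idm E) ev))) (cmp (asc E E (tens E B)) (asc (tens E E) E B)))"
      using pentagon[of E E E B] by simp
    finally show "cmp ev (tensm (cmp cm (tensm cm (idm E))) (idm B)) = cmp ev (tensm (cmp cm (cmp (tensm (idm E) cm) (asc E E E))) (idm B))"
      using L by simp
  qed
  show ?thesis unfolding em_monoid_def
    using a alg1 alg2 cm ident massoc lunit runit compat by blast
qed

end

theorem theorem15:
  fixes Hom :: "'o \<Rightarrow> 'o \<Rightarrow> 'm set"
    and cmp :: "'m \<Rightarrow> 'm \<Rightarrow> 'm"
    and idm :: "'o \<Rightarrow> 'm"
    and tens :: "'o \<Rightarrow> 'o \<Rightarrow> 'o"
    and tensm :: "'m \<Rightarrow> 'm \<Rightarrow> 'm"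
    and I :: 'o
    and asc :: "'o \<Rightarrow> 'o \<Rightarrow> 'o \<Rightarrow> 'm"
    and lu :: "'o \<Rightarrow> 'm"
    and ru :: "'o \<Rightarrow> 'm"
    and exp :: "'o \<Rightarrow> 'o \<Rightarrow> 'o"
    and app :: "'o \<Rightarrow> 'o \<Rightarrow> 'm"
    and Mo :: "'o \<Rightarrow> 'o"
    and Mm :: "'m \<Rightarrow> 'm"
    and eta :: "'o \<Rightarrow> 'm"
    and mu :: "'o \<Rightarrow> 'm"
    and tau :: "'o \<Rightarrow> 'o \<Rightarrow> 'm"
    and A :: 'o
  assumes "strong_monad_closed Hom cmp idm tens tensm I asc lu ru exp app Mo Mm eta mu tau"
  shows "let E = exp (Mo A) (Mo A);
             p = cmp (mu A) (cmp (Mm (app (Mo A) (Mo A))) (tau E (Mo A)));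
             k = cmp (app (Mo A) (Mo A)) (cmp (tensm (idm E) (app (Mo A) (Mo A))) (asc E E (Mo A)));
             comp = Lam Hom cmp idm tensm exp app (tens E E) (Mo A) (Mo A) k;
             ident = Lam Hom cmp idm tensm exp app I (Mo A) (Mo A) (lu (Mo A))
         in em_monoid Hom cmp idm tens tensm I asc lu ru Mo Mm eta mu tau
              E (Lam Hom cmp idm tensm exp app (Mo E) (Mo A) (Mo A) p) comp ident"
  unfolding Let_def by (rule strong_monad_closed.main[OF assms])

end
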